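(* Let $\nu>0$, $0<K<\nu^2/2$, and let $(\Phi_m)$ satisfy the standing assumptions in the context. Then for every $W\in\mathcal{C}_K$ the gradient $\partial\mathcal{P}(W):=\sum_{m=1}^\infty A_m\Psi_m'(A_mW)$ is well-defined as an element of $\mathsf{L}^2(\mathbb{R})$.
   Context: $A_m f(\xi):=\int_{-m/2}^{m/2} f(\xi+s)\,ds$. $\Psi_m(r):=\Phi_m(\nu m-r)-\Phi_m(\nu m)+\Phi_m'(\nu m)r$ for $r\in[0,\nu m)$. $\mathcal{C}$ is the $\mathsf{L}^2(\mathbb{R})$-closure of $\{W\in C_c^\infty(\mathbb{R}): W(x)=W(-x)\ge0,\ \dot W(x)=-\dot W(-x)\le0\ \forall x\ge0\}$; $\mathcal{C}_K:=\{W\in\mathcal{C}:\frac12\|W\|_2^2=K\}$. Standing assumptions: for every $m$, $\Phi_m:[0,\infty)\to[0,\infty)$, $\Phi_m\in C^4([0,\infty))$, $\Phi_m\ge0,\Phi_m'\le0,\Phi_m''\ge0,\Phi_m'''\le0,\Phi_m^{(4)}\ge0$ (strict for $m=1$, $s>0$); and for a fixed $\gamma\in(5/2,3)$ the series $\sum_m\Phi_m'(\nu m-\sqrt{2Km})m$, $\sum_m\Phi_m''(\nu m-\sqrt{2Km})m^2$, $\sum_m\Phi_m''(\nu m)m^\gamma$, $\sum_m\Phi_m'''(\nu m-\sqrt{2Km})m^{3/2}$ are finite. *)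

theory Defs
  imports "HOL-Analysis.Analysis"
begin

definition Aavg :: "nat \<Rightarrow> (real \<Rightarrow> real) \<Rightarrow> real \<Rightarrow> real" where
  "Aavg m f \<xi> = (LBINT s:{- (real m / 2) .. real m / 2}. f (\<xi> + s))"

text \<open>Psi_m(r) = Phi_m(nu m - r) - Phi_m(nu m) + Phi_m'(nu m) r, where Phi m k denotes
  the k-th derivative of Phi_m (Phi m 0 = Phi_m).\<close>
definition Psi :: "(nat \<Rightarrow> nat \<Rightarrow> real \<Rightarrow> real) \<Rightarrow> real \<Rightarrow> nat \<Rightarrow> real \<Rightarrow> real" where
  "Psi Phi \<nu> m r = Phi m 0 (\<nu> * real m - r) - Phi m 0 (\<nu> * real m) + Phi m 1 (\<nu> * real m) * r"

definition L2 :: "(real \<Rightarrow> real) \<Rightarrow> bool" where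
  "L2 f \<longleftrightarrow> f \<in> borel_measurable lborel \<and> integrable lborel (\<lambda>x. (f x)\<^sup>2)"

definition gen_C :: "(real \<Rightarrow> real) \<Rightarrow> bool" where
  "gen_C W \<longleftrightarrow>
     (\<forall>k x. ((deriv ^^ k) W) differentiable (at x)) \<and>
     bounded {x. W x \<noteq> 0} \<and>
     (\<forall>x\<ge>0. W x = W (-x) \<and> W x \<ge> 0 \<and> deriv W x = - deriv W (-x) \<and> deriv W x \<le> 0)"

definition setC :: "(real \<Rightarrow> real) set" where
  "setC = {W. L2 W \<and> (\<exists>V. (\<forall>n. gen_C (V n)) \<and>
             (\<lambda>n. LINT x|lborel. (V n x - W x)\<^sup>2) \<longlonglongrightarrow> 0)}"

definition setC_K :: "real \<Rightarrow> (real \<Rightarrow> real) set" where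
  "setC_K K = {W \<in> setC. (1/2) * (LINT x|lborel. (W x)\<^sup>2) = K}"

end

theory Submission
  imports Defs
begin

lemma Aavg_meas[measurable]:
  assumes [measurable]: "h \<in> borel_measurable lborel"
  shows "Aavg m h \<in> borel_measurable lborel"
proof -
  have "(\<lambda>x. LINT s|lborel. indicator {- (real m / 2) .. real m / 2} s *\<^sub>R h (x + s)) \<in> borel_measurable lborel"
    by measurable
  then show ?thesis unfolding Aavg_def[abs_def] set_lebesgue_integral_def by simp
qed

lemma Aavg_pt:
  assumes [measurable]: "h \<in> borel_measurable lborel"
  shows "ennreal ((Aavg m h x)\<^sup>2) \<le> real m * (\<integral>\<^sup>+s. indicator {- (real m / 2) .. real m / 2} s * ennreal ((h (x+s))\<^sup>2) \<partial>lborel)"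
proof -
  let ?I = "{- (real m / 2) .. real m / 2}"
  let ?f = "\<lambda>s. indicator ?I s *\<^sub>R h (x + s)"
  have b: "ennreal \<bar>Aavg m h x\<bar> \<le> (\<integral>\<^sup>+s. ennreal (indicator ?I s * \<bar>h (x+s)\<bar>) \<partial>lborel)"
  proof (cases "integrable lborel ?f")
    case True
    have "ennreal \<bar>Aavg m h x\<bar> = ennreal (norm (integral\<^sup>L lborel ?f))"
      unfolding Aavg_def set_lebesgue_integral_def by simp
    also have "\<dots> \<le> (\<integral>\<^sup>+s. norm (?f s) \<partial>lborel)"
      using integral_norm_bound_ennreal[OF True] by simp
    also have "\<dots> = (\<integral>\<^sup>+s. ennreal (indicator ?I s * \<bar>h (x+s)\<bar>) \<partial>lborel)"
      by (intro nn_integral_cong) (auto simp: indicator_def)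
    finally show ?thesis .
  next
    case False
    then show ?thesis unfolding Aavg_def set_lebesgue_integral_def
      by (simp add: not_integrable_integral_eq)
  qed
  have "ennreal ((Aavg m h x)\<^sup>2) = (ennreal \<bar>Aavg m h x\<bar>)\<^sup>2"
    by (subst ennreal_power) auto
  also have "\<dots> \<le> (\<integral>\<^sup>+s. ennreal (indicator ?I s * \<bar>h (x+s)\<bar>) \<partial>lborel)\<^sup>2"
    using b by (intro power_mono) auto
  also have "\<dots> = (\<integral>\<^sup>+s. ennreal (indicator ?I s * \<bar>h (x+s)\<bar>) * indicator ?I s \<partial>lborel)\<^sup>2"
    by (intro arg_cong[where f="\<lambda>z. z^2"] nn_integral_cong) (auto simp: indicator_def)
  also have "\<dots> \<le> (\<integral>\<^sup>+s. (ennreal (indicator ?I s * \<bar>h (x+s)\<bar>))^2 \<partial>lborel) * (\<integral>\<^sup>+s. (indicator ?I s)^2 \<partial>lborel)"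
    by (rule Cauchy_Schwarz_nn_integral) auto
  also have "(\<integral>\<^sup>+s. (indicator ?I s :: ennreal)^2 \<partial>lborel) = real m"
  proof -
    have "(\<integral>\<^sup>+s. (indicator ?I s :: ennreal)^2 \<partial>lborel) = (\<integral>\<^sup>+s. indicator ?I s \<partial>lborel)"
      by (intro nn_integral_cong) (auto simp: indicator_def)
    also have "\<dots> = real m" by simp
    finally show ?thesis .
  qed
  also have "(\<integral>\<^sup>+s. (ennreal (indicator ?I s * \<bar>h (x+s)\<bar>))^2 \<partial>lborel)
      = (\<integral>\<^sup>+s. indicator ?I s * ennreal ((h (x+s))\<^sup>2) \<partial>lborel)"
    by (intro nn_integral_cong) (auto simp: indicator_def ennreal_power)
  finally show ?thesis by (simp add: mult.commute)
qed

lemma Aavg_L2nn: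
  assumes [measurable]: "h \<in> borel_measurable lborel"
  shows "(\<integral>\<^sup>+x. ennreal ((Aavg m h x)\<^sup>2) \<partial>lborel) \<le> (real m)\<^sup>2 * (\<integral>\<^sup>+x. ennreal ((h x)\<^sup>2) \<partial>lborel)"
proof -
  let ?I = "{- (real m / 2) .. real m / 2}"
  have hb[measurable]: "h \<in> borel_measurable borel" using assms by simp
  have tr: "(\<integral>\<^sup>+x. ennreal ((h (x+s))\<^sup>2) \<partial>lborel) = (\<integral>\<^sup>+x. ennreal ((h x)\<^sup>2) \<partial>lborel)" for s
    using nn_integral_real_affine[of "\<lambda>y. ennreal ((h y)\<^sup>2)" 1 s] by (simp add: add.commute)
  have "(\<integral>\<^sup>+x. ennreal ((Aavg m h x)\<^sup>2) \<partial>lborel) \<le>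
     (\<integral>\<^sup>+x. real m * (\<integral>\<^sup>+s. indicator ?I s * ennreal ((h (x+s))\<^sup>2) \<partial>lborel) \<partial>lborel)"
    by (intro nn_integral_mono Aavg_pt) simp
  also have "\<dots> = real m * (\<integral>\<^sup>+x. (\<integral>\<^sup>+s. indicator ?I s * ennreal ((h (x+s))\<^sup>2) \<partial>lborel) \<partial>lborel)"
    by (rule nn_integral_cmult) measurable
  also have "(\<integral>\<^sup>+x. (\<integral>\<^sup>+s. indicator ?I s * ennreal ((h (x+s))\<^sup>2) \<partial>lborel) \<partial>lborel)
     = (\<integral>\<^sup>+s. (\<integral>\<^sup>+x. indicator ?I s * ennreal ((h (x+s))\<^sup>2) \<partial>lborel) \<partial>lborel)"
    by (rule lborel_pair.Fubini'[symmetric]) measurable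
  also have "\<dots> = (\<integral>\<^sup>+s. indicator ?I s * (\<integral>\<^sup>+x. ennreal ((h x)\<^sup>2) \<partial>lborel) \<partial>lborel)"
    by (intro nn_integral_cong) (simp add: nn_integral_cmult tr)
  also have "\<dots> = real m * (\<integral>\<^sup>+x. ennreal ((h x)\<^sup>2) \<partial>lborel)"
    by (subst mult.commute) (simp add: nn_integral_cmult_indicator mult.commute)
  finally show ?thesis by (simp add: power2_eq_square mult.assoc ennreal_mult)
qed

lemma L2_Aavg:
  assumes "L2 h"
  shows "L2 (Aavg m h)"
    and "(\<integral>\<^sup>+x. ennreal ((Aavg m h x)\<^sup>2) \<partial>lborel) \<le> (real m)\<^sup>2 * (\<integral>\<^sup>+x. ennreal ((h x)\<^sup>2) \<partial>lborel)"
proof -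
  have [measurable]: "h \<in> borel_measurable lborel" using assms by (simp add: L2_def)
  have fin: "(\<integral>\<^sup>+x. ennreal ((h x)\<^sup>2) \<partial>lborel) < \<infinity>"
    using assms unfolding L2_def integrable_iff_bounded by simp
  show le: "(\<integral>\<^sup>+x. ennreal ((Aavg m h x)\<^sup>2) \<partial>lborel) \<le> (real m)\<^sup>2 * (\<integral>\<^sup>+x. ennreal ((h x)\<^sup>2) \<partial>lborel)"
    by (rule Aavg_L2nn) simp
  also have "\<dots> < \<infinity>" using fin by (simp add: ennreal_mult_less_top)
  finally show "L2 (Aavg m h)"
    unfolding L2_def integrable_iff_bounded by simp
qed

lemma gen_C_props:
  assumes "gen_C V"
  shows "\<And>x. V x \<ge> 0" "continuous_on UNIV V" "integrable lborel (\<lambda>x. (V x)\<^sup>2)"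
proof -
  have A: "\<forall>x\<ge>0. V x = V (-x) \<and> V x \<ge> 0" using assms unfolding gen_C_def by blast
  show nn: "V x \<ge> 0" for x
  proof (cases "x \<ge> 0")
    case False
    then have "V (-x) \<ge> 0" "V (-x) = V x" using A[rule_format, of "-x"] by auto
    then show ?thesis by simp
  next
    case True then show ?thesis using A by blast
  qed
  have "\<forall>x. ((deriv ^^ 0) V) differentiable (at x)" using assms unfolding gen_C_def by blast
  then have "\<forall>x. V differentiable (at x)" by simp
  then show cont: "continuous_on UNIV V"
    by (simp add: continuous_at_imp_continuous_on differentiable_imp_continuous_within)
  obtain R where R: "\<And>x. V x \<noteq> 0 \<Longrightarrow> x \<in> cball 0 R"
  proof -
    have "bounded {x. V x \<noteq> 0}" using assms unfolding gen_C_def by blast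
    then obtain R where "\<forall>x\<in>{x. V x \<noteq> 0}. norm x \<le> R" unfolding bounded_iff by blast
    then show ?thesis using that by (auto simp: mem_cball dist_norm)
  qed
  have "integrable lborel (\<lambda>x. indicator (cball 0 R) x *\<^sub>R (V x)\<^sup>2)"
    by (rule borel_integrable_compact) (auto intro!: continuous_on_power continuous_on_subset[OF cont])
  also have "(\<lambda>x. indicator (cball 0 R) x *\<^sub>R (V x)\<^sup>2) = (\<lambda>x. (V x)\<^sup>2)"
    using R by (auto simp: indicator_def fun_eq_iff)
  finally show "integrable lborel (\<lambda>x. (V x)\<^sup>2)" .
qed

lemma setC_nonneg:
  assumes "W \<in> setC"
  shows "AE x in lborel. 0 \<le> W x"
proof -
  obtain V where V: "\<And>n. gen_C (V n)" and lim: "(\<lambda>n. LINT x|lborel. (V n x - W x)\<^sup>2) \<longlonglongrightarrow> 0"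
    and L: "L2 W" using assms unfolding setC_def by blast
  have [measurable]: "W \<in> borel_measurable lborel" using L by (simp add: L2_def)
  have Wi: "integrable lborel (\<lambda>x. (W x)\<^sup>2)" using L by (simp add: L2_def)
  let ?N = "{x. W x < 0}"
  let ?q = "\<integral>\<^sup>+x. indicator ?N x * ennreal ((W x)\<^sup>2) \<partial>lborel"
  have qle: "?q \<le> ennreal (LINT x|lborel. (V n x - W x)\<^sup>2)" for n
  proof -
    have Vn: "\<And>x. V n x \<ge> 0" "continuous_on UNIV (V n)" "integrable lborel (\<lambda>x. (V n x)\<^sup>2)"
      using gen_C_props[OF V[of n]] by auto
    have [measurable]: "V n \<in> borel_measurable lborel"
      using Vn(2) borel_measurable_continuous_onI by simp
    have int: "integrable lborel (\<lambda>x. (V n x - W x)\<^sup>2)"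
    proof (rule Bochner_Integration.integrable_bound[where f="\<lambda>x. 2 * (V n x)\<^sup>2 + 2 * (W x)\<^sup>2"])
      show "integrable lborel (\<lambda>x. 2 * (V n x)\<^sup>2 + 2 * (W x)\<^sup>2)"
        using Vn(3) Wi by auto
      show "AE x in lborel. norm ((V n x - W x)\<^sup>2) \<le> norm (2 * (V n x)\<^sup>2 + 2 * (W x)\<^sup>2)"
      proof (intro AE_I2)
        fix x
        have "(V n x - W x)\<^sup>2 \<le> 2 * (V n x)\<^sup>2 + 2 * (W x)\<^sup>2"
          using sum_squares_ge_zero[of "V n x + W x" 0] by (simp add: power2_eq_square algebra_simps)
        then show "norm ((V n x - W x)\<^sup>2) \<le> norm (2 * (V n x)\<^sup>2 + 2 * (W x)\<^sup>2)" by simp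
      qed
    qed measurable
    have "?q \<le> (\<integral>\<^sup>+x. ennreal ((V n x - W x)\<^sup>2) \<partial>lborel)"
    proof (intro nn_integral_mono)
      fix x show "indicator ?N x * ennreal ((W x)\<^sup>2) \<le> ennreal ((V n x - W x)\<^sup>2)"
      proof (cases "W x < 0")
        case True
        then have "(- W x)\<^sup>2 \<le> (V n x - W x)\<^sup>2" using Vn(1)[of x]
          by (intro power_mono) auto
        then have "(W x)\<^sup>2 \<le> (V n x - W x)\<^sup>2" by simp
        then show ?thesis using True by (simp add: indicator_def)
      qed (simp add: indicator_def)
    qed
    also have "\<dots> = ennreal (LINT x|lborel. (V n x - W x)\<^sup>2)"
      by (rule nn_integral_eq_integral[OF int]) simp
    finally show ?thesis .
  qed
  have "(\<lambda>n. ennreal (LINT x|lborel. (V n x - W x)\<^sup>2)) \<longlonglongrightarrow> ennreal 0"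
    by (rule tendsto_ennrealI[OF lim])
  then have "?q \<le> ennreal 0"
    by (rule LIMSEQ_le_const) (use qle in blast)
  then have "?q = 0" by simp
  then have "AE x in lborel. indicator ?N x * ennreal ((W x)\<^sup>2) = 0"
    by (subst (asm) nn_integral_0_iff_AE) auto
  then show ?thesis
    by eventually_elim (auto simp: indicator_def split: if_splits)
qed

lemma nn_shift:
  fixes h :: "real \<Rightarrow> real"
  assumes [measurable]: "h \<in> borel_measurable lborel"
  shows "(\<integral>\<^sup>+x. ennreal ((h (x+s))\<^sup>2) \<partial>lborel) = (\<integral>\<^sup>+x. ennreal ((h x)\<^sup>2) \<partial>lborel)"
proof -
  have hb[measurable]: "h \<in> borel_measurable borel" using assms by simp
  show ?thesis
    using nn_integral_real_affine[of "\<lambda>y. ennreal ((h y)\<^sup>2)" 1 s] by (simp add: add.commute)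
qed

lemma setCK_props:
  assumes "W \<in> setC_K K"
  shows "L2 W" "(\<integral>\<^sup>+x. ennreal ((W x)\<^sup>2) \<partial>lborel) = ennreal (2*K)"
    "0 \<le> Aavg m W \<xi>" "(Aavg m W \<xi>)\<^sup>2 \<le> 2 * K * real m"
proof -
  have C: "W \<in> setC" and KK: "(1/2) * (LINT x|lborel. (W x)\<^sup>2) = K"
    using assms unfolding setC_K_def by auto
  show L: "L2 W" using C unfolding setC_def by blast
  have [measurable]: "W \<in> borel_measurable lborel" and Wi: "integrable lborel (\<lambda>x. (W x)\<^sup>2)"
    using L by (auto simp: L2_def)
  have Wb[measurable]: "W \<in> borel_measurable borel" by simp
  show nnW: "(\<integral>\<^sup>+x. ennreal ((W x)\<^sup>2) \<partial>lborel) = ennreal (2*K)"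
    using nn_integral_eq_integral[OF Wi] KK by (simp add: mult.commute)
  let ?I = "{- (real m / 2) .. real m / 2}"
  have "AE x in lborel. 0 \<le> W x" by (rule setC_nonneg[OF C])
  then have "AE x in lborel. 0 \<le> W (\<xi> + 1 * x)"
    by (intro AE_borel_affine) auto
  then have "AE s in lborel. 0 \<le> indicator ?I s *\<^sub>R W (\<xi> + s)"
    by eventually_elim (simp add: indicator_def)
  then show "0 \<le> Aavg m W \<xi>"
    unfolding Aavg_def set_lebesgue_integral_def by (rule integral_nonneg_AE)
  have "ennreal ((Aavg m W \<xi>)\<^sup>2) \<le> real m * (\<integral>\<^sup>+s. indicator ?I s * ennreal ((W (\<xi>+s))\<^sup>2) \<partial>lborel)"
    by (rule Aavg_pt) simp
  also have "\<dots> \<le> real m * (\<integral>\<^sup>+s. ennreal ((W (s+\<xi>))\<^sup>2) \<partial>lborel)"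
    by (intro mult_left_mono nn_integral_mono) (auto simp: indicator_def add.commute)
  also have "\<dots> = ennreal (2 * K * real m)"
    by (simp add: nn_shift nnW ennreal_mult'[symmetric] mult.commute)
  finally have "ennreal ((Aavg m W \<xi>)\<^sup>2) \<le> ennreal (2 * K * real m)" .
  then show "(Aavg m W \<xi>)\<^sup>2 \<le> 2 * K * real m"
  proof -
    have "0 \<le> K" using KK integral_nonneg_AE[of "\<lambda>x. (W x)\<^sup>2" lborel] by simp
    then have "0 \<le> 2 * K * real m" by simp
    moreover assume "ennreal ((Aavg m W \<xi>)\<^sup>2) \<le> ennreal (2 * K * real m)"
    ultimately show ?thesis by (simp add: ennreal_le_iff)
  qed
qed

lemma phi_facts:
  fixes Phi :: "nat \<Rightarrow> nat \<Rightarrow> real \<Rightarrow> real"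
  assumes C4m: "\<And>k x. k < 4 \<Longrightarrow> x \<ge> 0 \<Longrightarrow> (Phi m k has_real_derivative Phi m (Suc k) x) (at x within {0..})"
    and sg: "\<And>k x. k \<le> 4 \<Longrightarrow> x \<ge> 0 \<Longrightarrow> (-1) ^ k * Phi m k x \<ge> 0"
    and t: "0 < t" "t \<le> \<nu> * real m - r" and r: "0 \<le> r"
  shows "deriv (Psi Phi \<nu> m) r = Phi m 1 (\<nu> * real m) - Phi m 1 (\<nu> * real m - r)"
    "0 \<le> Phi m 1 (\<nu> * real m) - Phi m 1 (\<nu> * real m - r)"
    "Phi m 1 (\<nu> * real m) - Phi m 1 (\<nu> * real m - r) \<le> Phi m 2 t * r"
proof -
  have D: "(Phi m k has_real_derivative Phi m (Suc k) x) (at x)" if "k < 4" "x > 0" for k x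
  proof -
    have "at x within {0..} = at x" using that by (intro at_within_interior) simp
    then show ?thesis using C4m[of k x] that by simp
  qed
  let ?M = "\<nu> * real m"
  have "((\<lambda>r. Phi m 0 (?M - r) - Phi m 0 ?M + Phi m 1 ?M * r) has_real_derivative
        (Phi m 1 (?M - r) * (-1) + Phi m 1 ?M)) (at r)"
    using t r by (auto intro!: derivative_eq_intros DERIV_chain2[OF D[of 0]])
  then show "deriv (Psi Phi \<nu> m) r = Phi m 1 ?M - Phi m 1 (?M - r)"
    unfolding Psi_def[abs_def] by (subst DERIV_imp_deriv) auto
  show "0 \<le> Phi m 1 ?M - Phi m 1 (?M - r)" and "Phi m 1 ?M - Phi m 1 (?M - r) \<le> Phi m 2 t * r"
  proof -
    have "0 \<le> Phi m 1 ?M - Phi m 1 (?M - r) \<and> Phi m 1 ?M - Phi m 1 (?M - r) \<le> Phi m 2 t * r"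
    proof (cases "r = 0")
      case True
      then show ?thesis by simp
    next
      case False
      then have lt: "?M - r < ?M" using r by simp
      obtain z where z: "?M - r < z" "z < ?M" "Phi m 1 ?M - Phi m 1 (?M - r) = (?M - (?M - r)) * Phi m 2 z"
      proof -
        have "DERIV (Phi m 1) x :> Phi m 2 x" if "?M - r \<le> x" for x
          using D[of 1 x] that t by (simp add: numeral_2_eq_2)
        then show ?thesis using MVT2[OF lt, of "Phi m 1" "Phi m 2"] that by auto
      qed
      have z2: "0 \<le> Phi m 2 z" using sg[of 2 z] z t by simp
      have "Phi m 2 z \<le> Phi m 2 t"
      proof (cases "t < z")
        case True
        obtain w where w: "t < w" "w < z" "Phi m 2 z - Phi m 2 t = (z - t) * Phi m 3 w"
        proof -
          have "DERIV (Phi m 2) x :> Phi m 3 x" if "t \<le> x" for x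
            using D[of 2 x] that t by (simp add: numeral_3_eq_3 numeral_2_eq_2)
          then show ?thesis using MVT2[OF True, of "Phi m 2" "Phi m 3"] that by auto
        qed
        have "Phi m 3 w \<le> 0" using sg[of 3 w] w t by simp
        then have "(z - t) * Phi m 3 w \<le> 0" using True by (simp add: mult_nonneg_nonpos)
        then show ?thesis using w by simp
      next
        case False
        then show ?thesis using z t by simp
      qed
      then show ?thesis using z z2 r by (simp add: mult_left_mono mult.commute)
    qed
    then show "0 \<le> Phi m 1 ?M - Phi m 1 (?M - r)" and "Phi m 1 ?M - Phi m 1 (?M - r) \<le> Phi m 2 t * r"
      by auto
  qed
qed

lemma per_m:
  fixes Phi :: "nat \<Rightarrow> nat \<Rightarrow> real \<Rightarrow> real"
  assumes C4m: "\<And>k x. k < 4 \<Longrightarrow> x \<ge> 0 \<Longrightarrow> (Phi m k has_real_derivative Phi m (Suc k) x) (at x within {0..})"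
    and sg: "\<And>k x. k \<le> 4 \<Longrightarrow> x \<ge> 0 \<Longrightarrow> (-1) ^ k * Phi m k x \<ge> 0"
    and W: "W \<in> setC_K K"
    and lt: "sqrt (2 * K * real m) < \<nu> * real m" and K0: "0 \<le> K"
  defines "g \<equiv> (\<lambda>\<xi>. deriv (Psi Phi \<nu> m) (Aavg m W \<xi>))"
  shows "0 \<le> Aavg m W \<xi> \<and> Aavg m W \<xi> < \<nu> * real m"
    and "g \<in> borel_measurable lborel"
    and "set_integrable lborel {a..b} g"
    and "L2 (Aavg m g)"
    and "0 \<le> Aavg m g x"
    and "(\<integral>\<^sup>+x. ennreal ((Aavg m g x)\<^sup>2) \<partial>lborel)
          \<le> ennreal (2 * K * (Phi m 2 (\<nu> * real m - sqrt (2 * K * real m)) * (real m)\<^sup>2)\<^sup>2)"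
proof -
  let ?t = "\<nu> * real m - sqrt (2 * K * real m)"
  let ?D = "Phi m 2 ?t"
  let ?M = "\<nu> * real m"
  let ?A = "Aavg m W"
  have LW: "L2 W" and nnW: "(\<integral>\<^sup>+x. ennreal ((W x)\<^sup>2) \<partial>lborel) = ennreal (2*K)"
    using setCK_props[OF W] by auto
  have [measurable]: "W \<in> borel_measurable lborel" using LW by (simp add: L2_def)
  have Am[measurable]: "?A \<in> borel_measurable lborel" by measurable
  have A0: "0 \<le> ?A \<xi>" for \<xi> using setCK_props[OF W] by auto
  have A1: "?A \<xi> \<le> sqrt (2 * K * real m)" for \<xi>
    using setCK_props(4)[OF W] by (intro real_le_rsqrt) auto
  have tpos: "0 < ?t" using lt by simp
  show "0 \<le> ?A \<xi> \<and> ?A \<xi> < ?M" using A0[of \<xi>] A1[of \<xi>] lt by auto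
  have tle: "?t \<le> ?M - ?A \<xi>" for \<xi> using A1[of \<xi>] by simp
  note pf = phi_facts[of Phi m, OF C4m sg tpos tle A0]
  have geq: "g \<xi> = Phi m 1 ?M - Phi m 1 (?M - ?A \<xi>)" for \<xi> unfolding g_def using pf(1) .
  have g0: "0 \<le> g \<xi>" for \<xi> unfolding geq using pf(2) .
  have g1: "g \<xi> \<le> ?D * ?A \<xi>" for \<xi> unfolding geq using pf(3) .
  have D0: "0 \<le> ?D" using sg[of 2 ?t] tpos by simp
  have cont1: "continuous_on {0..} (Phi m 1)"
    by (rule DERIV_continuous_on[OF C4m[of 1]]) auto
  have cont2: "continuous_on UNIV (\<lambda>y. Phi m 1 (max 0 y))"
    by (rule continuous_on_compose2[OF cont1]) (auto intro!: continuous_intros)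
  have "g = (\<lambda>\<xi>. Phi m 1 ?M - (\<lambda>y. Phi m 1 (max 0 y)) (?M - ?A \<xi>))"
  proof -
    have "?A \<xi> < ?M" for \<xi> using A1[of \<xi>] lt by linarith
    then have "max 0 (?M - ?A \<xi>) = ?M - ?A \<xi>" for \<xi> by (simp add: max_def less_imp_le)
    then show ?thesis by (simp add: fun_eq_iff geq)
  qed
  also have "\<dots> \<in> borel_measurable lborel"
    by (intro borel_measurable_diff borel_measurable_const borel_measurable_continuous_on[OF cont2]) measurable
  finally show gm[measurable]: "g \<in> borel_measurable lborel" .
  show "set_integrable lborel {a..b} g"
    unfolding set_integrable_def
  proof (rule Bochner_Integration.integrable_bound[where f="\<lambda>x. indicator {a..b} x *\<^sub>R (?D * sqrt (2 * K * real m))"])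
    show "integrable lborel (\<lambda>x. indicator {a..b} x *\<^sub>R (?D * sqrt (2 * K * real m)))"
      by (rule borel_integrable_compact) auto
    show "AE x in lborel. norm (indicator {a..b} x *\<^sub>R g x) \<le> norm (indicator {a..b} x *\<^sub>R (?D * sqrt (2 * K * real m)))"
    proof (intro AE_I2)
      fix x
      have "g x \<le> ?D * sqrt (2 * K * real m)"
        using g1[of x] mult_left_mono[OF A1[of x] D0] by linarith
      then show "norm (indicator {a..b} x *\<^sub>R g x) \<le> norm (indicator {a..b} x *\<^sub>R (?D * sqrt (2 * K * real m)))"
        using g0[of x] D0 by (auto simp: indicator_def)
    qed
  qed measurable
  have LA: "L2 ?A" and nnA: "(\<integral>\<^sup>+x. ennreal ((?A x)\<^sup>2) \<partial>lborel) \<le> (real m)\<^sup>2 * ennreal (2*K)"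
    using L2_Aavg[OF LW, of m] nnW by auto
  have gsq: "(g x)\<^sup>2 \<le> ?D\<^sup>2 * (?A x)\<^sup>2" for x
    using power_mono[OF g1[of x] g0[of x]] by (simp add: power_mult_distrib)
  have Lg: "L2 g" unfolding L2_def
  proof
    show "integrable lborel (\<lambda>x. (g x)\<^sup>2)"
    proof (rule Bochner_Integration.integrable_bound[where f="\<lambda>x. ?D\<^sup>2 * (?A x)\<^sup>2"])
      show "integrable lborel (\<lambda>x. ?D\<^sup>2 * (?A x)\<^sup>2)" using LA by (simp add: L2_def)
      show "AE x in lborel. norm ((g x)\<^sup>2) \<le> norm (?D\<^sup>2 * (?A x)\<^sup>2)"
        using gsq by (intro AE_I2) simp
    qed measurable
  qed (rule gm)
  show "L2 (Aavg m g)" using L2_Aavg[OF Lg] by simp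
  show "0 \<le> Aavg m g x"
    unfolding Aavg_def set_lebesgue_integral_def
    by (rule integral_nonneg_AE) (auto intro!: AE_I2 simp: g0)
  have "(\<integral>\<^sup>+x. ennreal ((Aavg m g x)\<^sup>2) \<partial>lborel) \<le> (real m)\<^sup>2 * (\<integral>\<^sup>+x. ennreal ((g x)\<^sup>2) \<partial>lborel)"
    using L2_Aavg[OF Lg] by simp
  also have "(\<integral>\<^sup>+x. ennreal ((g x)\<^sup>2) \<partial>lborel) \<le> (\<integral>\<^sup>+x. ennreal (?D\<^sup>2) * ennreal ((?A x)\<^sup>2) \<partial>lborel)"
    using gsq by (intro nn_integral_mono) (simp add: ennreal_mult[symmetric])
  also have "\<dots> = ennreal (?D\<^sup>2) * (\<integral>\<^sup>+x. ennreal ((?A x)\<^sup>2) \<partial>lborel)"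
    by (rule nn_integral_cmult) measurable
  also have "\<dots> \<le> ennreal (?D\<^sup>2) * ((real m)\<^sup>2 * ennreal (2*K))"
    by (intro mult_left_mono nnA) simp
  finally have "(\<integral>\<^sup>+x. ennreal ((Aavg m g x)\<^sup>2) \<partial>lborel) \<le> ennreal ((real m)\<^sup>2) * (ennreal (?D\<^sup>2) * (ennreal ((real m)\<^sup>2) * ennreal (2*K)))"
    by (simp add: mult_left_mono ennreal_power)
  also have "\<dots> = ennreal (2 * K * (?D * (real m)\<^sup>2)\<^sup>2)"
    using K0
    by (simp add: ennreal_mult'[symmetric] ennreal_mult[symmetric] power_mult_distrib mult_ac)
  finally show "(\<integral>\<^sup>+x. ennreal ((Aavg m g x)\<^sup>2) \<partial>lborel) \<le> ennreal (2 * K * (?D * (real m)\<^sup>2)\<^sup>2)" .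
qed

lemma finite_sum_bound:
  fixes f :: "nat \<Rightarrow> real \<Rightarrow> real" and a c :: "nat \<Rightarrow> real"
  assumes meas: "\<And>n. f n \<in> borel_measurable lborel"
    and bd: "\<And>n. (\<integral>\<^sup>+x. ennreal ((f n x)\<^sup>2) \<partial>lborel) \<le> ennreal (B * (a n)\<^sup>2)"
    and a0: "\<And>n. 0 \<le> a n" and ca: "\<And>n. a n \<le> c n" and c0: "\<And>n. 0 < c n" and B0: "0 \<le> B"
  shows "(\<integral>\<^sup>+x. ennreal ((\<Sum>n\<in>F. f n x)\<^sup>2) \<partial>lborel) \<le> ennreal ((\<Sum>n\<in>F. c n) * (B * (\<Sum>n\<in>F. a n)))"
proof -
  have [measurable]: "f n \<in> borel_measurable borel" for n using meas[of n] by simp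
  have pt: "(\<Sum>n\<in>F. f n x)\<^sup>2 \<le> (\<Sum>n\<in>F. c n) * (\<Sum>n\<in>F. (f n x)\<^sup>2 / c n)" for x
  proof -
    have "(\<Sum>n\<in>F. f n x) = (\<Sum>n\<in>F. sqrt (c n) * (f n x / sqrt (c n)))"
    proof (intro sum.cong refl)
      fix n assume "n \<in> F"
      have "sqrt (c n) \<noteq> 0" using c0[of n] by simp
      then show "f n x = sqrt (c n) * (f n x / sqrt (c n))" by simp
    qed
    also have "\<dots>\<^sup>2 \<le> (\<Sum>n\<in>F. (sqrt (c n))\<^sup>2) * (\<Sum>n\<in>F. (f n x / sqrt (c n))\<^sup>2)"
      by (rule Cauchy_Schwarz_ineq_sum)
    also have "\<dots> = (\<Sum>n\<in>F. c n) * (\<Sum>n\<in>F. (f n x)\<^sup>2 / c n)"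
      using c0 by (simp add: less_imp_le power_divide)
    finally show ?thesis .
  qed
  have "(\<integral>\<^sup>+x. ennreal ((\<Sum>n\<in>F. f n x)\<^sup>2) \<partial>lborel)
       \<le> (\<integral>\<^sup>+x. ennreal (\<Sum>n\<in>F. c n) * (\<Sum>n\<in>F. ennreal ((f n x)\<^sup>2) * ennreal (1 / c n)) \<partial>lborel)"
  proof (intro nn_integral_mono)
    fix x
    have "ennreal ((\<Sum>n\<in>F. f n x)\<^sup>2) \<le> ennreal ((\<Sum>n\<in>F. c n) * (\<Sum>n\<in>F. (f n x)\<^sup>2 / c n))"
      using pt by (rule ennreal_leI)
    also have "\<dots> = ennreal (\<Sum>n\<in>F. c n) * (\<Sum>n\<in>F. ennreal ((f n x)\<^sup>2) * ennreal (1 / c n))"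
      using c0 by (simp add: ennreal_mult'[symmetric] ennreal_mult[symmetric] sum_nonneg less_imp_le divide_inverse)
    finally show "ennreal ((\<Sum>n\<in>F. f n x)\<^sup>2) \<le> ennreal (\<Sum>n\<in>F. c n) * (\<Sum>n\<in>F. ennreal ((f n x)\<^sup>2) * ennreal (1 / c n))" .
  qed
  also have "\<dots> = ennreal (\<Sum>n\<in>F. c n) * (\<Sum>n\<in>F. (\<integral>\<^sup>+x. ennreal ((f n x)\<^sup>2) \<partial>lborel) * ennreal (1 / c n))"
    by (simp add: nn_integral_cmult nn_integral_sum nn_integral_multc)
  also have "\<dots> \<le> ennreal (\<Sum>n\<in>F. c n) * (\<Sum>n\<in>F. ennreal (B * a n))"
  proof (intro mult_left_mono sum_mono)
    fix n
    have "(\<integral>\<^sup>+x. ennreal ((f n x)\<^sup>2) \<partial>lborel) * ennreal (1 / c n) \<le> ennreal (B * (a n)\<^sup>2) * ennreal (1 / c n)"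
      by (intro mult_right_mono bd) simp
    also have "\<dots> = ennreal (B * (a n)\<^sup>2 / c n)"
      using B0 c0[of n] by (simp add: ennreal_mult[symmetric])
    also have "\<dots> \<le> ennreal (B * a n)"
    proof (rule ennreal_leI)
      have "(a n)\<^sup>2 \<le> a n * c n" using a0[of n] ca[of n] by (simp add: power2_eq_square mult_left_mono)
      then have "(a n)\<^sup>2 / c n \<le> a n" using c0[of n] by (simp add: divide_le_eq)
      then show "B * (a n)\<^sup>2 / c n \<le> B * a n" using B0 by (metis mult_left_mono times_divide_eq_right)
    qed
    finally show "(\<integral>\<^sup>+x. ennreal ((f n x)\<^sup>2) \<partial>lborel) * ennreal (1 / c n) \<le> ennreal (B * a n)" .
  qed simp
  also have "\<dots> = ennreal ((\<Sum>n\<in>F. c n) * (B * (\<Sum>n\<in>F. a n)))"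
    using B0 a0 c0 by (simp add: sum_nonneg less_imp_le ennreal_mult[symmetric] sum_distrib_left)
  finally show ?thesis .
qed

lemma sum_shift_split:
  fixes f :: "nat \<Rightarrow> real"
  shows "(\<Sum>n<N+M. f n) = (\<Sum>n<M. f n) + (\<Sum>k<N. f (k+M))"
  by (induct N) (auto simp: add.commute)

lemma tail_tendsto:
  fixes c :: "nat \<Rightarrow> real"
  assumes "summable c"
  shows "(\<lambda>M. \<Sum>k. c (k+M)) \<longlonglongrightarrow> 0"
proof -
  have "(\<lambda>M. suminf c - (\<Sum>i<M. c i)) \<longlonglongrightarrow> suminf c - suminf c"
    by (intro tendsto_diff tendsto_const summable_LIMSEQ assms)
  then show ?thesis using suminf_minus_initial_segment[OF assms] by simp
qed

lemma series_L2:
  fixes f :: "nat \<Rightarrow> real \<Rightarrow> real" and a :: "nat \<Rightarrow> real"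
  assumes meas: "\<And>n. f n \<in> borel_measurable lborel"
    and nn: "\<And>n x. 0 \<le> f n x"
    and bd: "\<And>n. (\<integral>\<^sup>+x. ennreal ((f n x)\<^sup>2) \<partial>lborel) \<le> ennreal (B * (a n)\<^sup>2)"
    and a0: "\<And>n. 0 \<le> a n" and sa: "summable a" and B0: "0 \<le> B"
  shows "\<exists>G. L2 G \<and> (\<lambda>N. LINT x|lborel. ((\<Sum>n<N. f n x) - G x)\<^sup>2) \<longlonglongrightarrow> 0"
proof -
  have [measurable]: "f n \<in> borel_measurable lborel" for n by (rule meas)
  define c where "c n = a n + (1/2)^n" for n
  have c0: "0 < c n" for n using a0[of n] by (simp add: c_def add_nonneg_pos)
  have ca: "a n \<le> c n" for n by (simp add: c_def)
  have sc: "summable c" unfolding c_def by (intro summable_add sa summable_geometric) simp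
  define T where "T M = (\<Sum>k. c (k+M)) * (B * (\<Sum>k. a (k+M)))" for M
  have T0: "T \<longlonglongrightarrow> 0"
  proof -
    have "(\<lambda>M. (\<Sum>k. c (k+M)) * (B * (\<Sum>k. a (k+M)))) \<longlonglongrightarrow> 0 * (B * 0)"
      by (intro tendsto_mult tendsto_const tail_tendsto sc sa)
    then show ?thesis by (simp add: T_def[abs_def])
  qed
  have fb: "(\<integral>\<^sup>+x. ennreal ((\<Sum>k<N. f (k+M) x)\<^sup>2) \<partial>lborel) \<le> ennreal (T M)" for N M
  proof -
    have "(\<integral>\<^sup>+x. ennreal ((\<Sum>k<N. f (k+M) x)\<^sup>2) \<partial>lborel)
        \<le> ennreal ((\<Sum>k<N. c (k+M)) * (B * (\<Sum>k<N. a (k+M))))"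
      by (rule finite_sum_bound[where f="\<lambda>k. f (k+M)"]) (auto intro: bd a0 ca c0 B0)
    also have "\<dots> \<le> ennreal (T M)" unfolding T_def
    proof (intro ennreal_leI mult_mono mult_left_mono B0 sum_le_suminf)
      show "summable (\<lambda>k. c (k+M))" "summable (\<lambda>k. a (k+M))"
        using sc sa by (auto intro: summable_ignore_initial_segment)
    qed (auto intro: less_imp_le c0 a0 sum_nonneg mult_nonneg_nonneg B0 suminf_nonneg
          summable_ignore_initial_segment sc)
    finally show ?thesis .
  qed
  define S where "S N x = (\<Sum>n<N. f n x)" for N x
  have [measurable]: "S N \<in> borel_measurable lborel" for N unfolding S_def[abs_def] by measurable
  have S0: "0 \<le> S N x" for N x unfolding S_def by (auto intro: sum_nonneg nn)
  have Sinc: "S N x \<le> S (N + k) x" for N k x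
    using sum_shift_split[of "\<lambda>n. f n x" k N] unfolding S_def by (simp add: add.commute sum_nonneg nn)
  have Smono: "mono (\<lambda>N. S N x)" for x
    by (rule monoI) (metis Sinc le_add_diff_inverse)
  have inc0: "incseq (\<lambda>N x. ennreal ((S N x)\<^sup>2))"
    by (intro monoI le_funI ennreal_leI power_mono S0) (use Smono in \<open>auto simp: mono_def\<close>)
  have "(\<integral>\<^sup>+x. (SUP N. ennreal ((S N x)\<^sup>2)) \<partial>lborel) = (SUP N. \<integral>\<^sup>+x. ennreal ((S N x)\<^sup>2) \<partial>lborel)"
    by (rule nn_integral_monotone_convergence_SUP[OF inc0]) measurable
  also have "\<dots> \<le> ennreal (T 0)"
  proof (intro SUP_least)
    fix N show "(\<integral>\<^sup>+x. ennreal ((S N x)\<^sup>2) \<partial>lborel) \<le> ennreal (T 0)"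
      using fb[where N=N and M=0] by (simp add: S_def)
  qed
  finally have X: "(\<integral>\<^sup>+x. (SUP N. ennreal ((S N x)\<^sup>2)) \<partial>lborel) \<le> ennreal (T 0)" .
  have "(\<integral>\<^sup>+x. (SUP N. ennreal ((S N x)\<^sup>2)) \<partial>lborel) \<noteq> \<infinity>"
  proof
    assume "(\<integral>\<^sup>+x. (SUP N. ennreal ((S N x)\<^sup>2)) \<partial>lborel) = \<infinity>"
    then show False using X by (simp add: top_unique)
  qed
  then have AEfin: "AE x in lborel. (SUP N. ennreal ((S N x)\<^sup>2)) \<noteq> \<infinity>"
    by (intro nn_integral_PInf_AE) measurable
  have AEsum: "AE x in lborel. summable (\<lambda>n. f n x)"
    using AEfin
  proof eventually_elim
    case (elim x)
    then obtain b where b: "(SUP N. ennreal ((S N x)\<^sup>2)) = ennreal b" "0 \<le> b"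
      using less_top_ennreal[of "SUP N. ennreal ((S N x)\<^sup>2)"] by (auto simp: less_top[symmetric])
    show ?case
    proof (rule summableI_nonneg_bounded[where x="sqrt b"])
      fix N
      have "ennreal ((S N x)\<^sup>2) \<le> ennreal b" using b(1) by (metis SUP_upper UNIV_I)
      then have "(S N x)\<^sup>2 \<le> b" using b(2) by (simp add: ennreal_le_iff)
      then show "(\<Sum>i<N. f i x) \<le> sqrt b" unfolding S_def[symmetric] by (rule real_le_rsqrt)
    qed (rule nn)
  qed
  define G where "G x = (\<Sum>n. f n x)" for x
  have [measurable]: "G \<in> borel_measurable lborel" unfolding G_def[abs_def] by measurable
  have key: "(\<integral>\<^sup>+x. ennreal ((S M x - G x)\<^sup>2) \<partial>lborel) \<le> ennreal (T M)" for M
  proof -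
    have incM: "incseq (\<lambda>N x. ennreal ((\<Sum>k<N. f (k+M) x)\<^sup>2))"
      by (intro monoI le_funI ennreal_leI power_mono sum_nonneg sum_mono2 nn) auto
    have "AE x in lborel. ennreal ((S M x - G x)\<^sup>2) = (SUP N. ennreal ((\<Sum>k<N. f (k+M) x)\<^sup>2))"
      using AEsum
    proof eventually_elim
      case (elim x)
      have sM: "summable (\<lambda>k. f (k+M) x)" using elim by (rule summable_ignore_initial_segment)
      have "(\<lambda>N. \<Sum>k<N. f (k+M) x) \<longlonglongrightarrow> (\<Sum>k. f (k+M) x)" by (rule summable_LIMSEQ[OF sM])
      also have "(\<Sum>k. f (k+M) x) = G x - S M x"
        unfolding G_def S_def by (rule suminf_minus_initial_segment[OF elim])
      finally have "(\<lambda>N. ennreal ((\<Sum>k<N. f (k+M) x)\<^sup>2)) \<longlonglongrightarrow> ennreal ((G x - S M x)\<^sup>2)"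
        by (intro tendsto_ennrealI tendsto_power)
      moreover have "incseq (\<lambda>N. ennreal ((\<Sum>k<N. f (k+M) x)\<^sup>2))"
        using incM by (auto simp: mono_def le_fun_def)
      ultimately show ?case
        by (subst SUP_Lim) (auto simp: power2_commute)
    qed
    then have "(\<integral>\<^sup>+x. ennreal ((S M x - G x)\<^sup>2) \<partial>lborel) = (\<integral>\<^sup>+x. (SUP N. ennreal ((\<Sum>k<N. f (k+M) x)\<^sup>2)) \<partial>lborel)"
      by (rule nn_integral_cong_AE)
    also have "\<dots> = (SUP N. \<integral>\<^sup>+x. ennreal ((\<Sum>k<N. f (k+M) x)\<^sup>2) \<partial>lborel)"
      by (rule nn_integral_monotone_convergence_SUP[OF incM]) measurable
    also have "\<dots> \<le> ennreal (T M)" by (intro SUP_least fb)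
    finally show ?thesis .
  qed
  have T0le: "0 \<le> T M" for M unfolding T_def
    by (intro mult_nonneg_nonneg B0 suminf_nonneg summable_ignore_initial_segment sc sa less_imp_le c0 a0)
  have intM: "integrable lborel (\<lambda>x. (S M x - G x)\<^sup>2)" for M
    unfolding integrable_iff_bounded using key[of M] by (auto simp: le_less_trans)
  have LINT: "(LINT x|lborel. (S M x - G x)\<^sup>2) \<le> T M" for M
    using key[of M] T0le[of M] by (subst integral_eq_nn_integral) (auto intro: enn2real_leI)
  have "L2 G" unfolding L2_def using intM[of 0] by (simp add: S_def)
  moreover have "(\<lambda>N. LINT x|lborel. (S N x - G x)\<^sup>2) \<longlonglongrightarrow> 0"
    by (rule tendsto_sandwich[OF _ _ tendsto_const T0]) (auto intro!: always_eventually LINT integral_nonneg_AE)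
  ultimately show ?thesis unfolding S_def by blast
qed

theorem lemma2p5:
  fixes \<nu> K \<gamma> :: real and Phi :: "nat \<Rightarrow> nat \<Rightarrow> real \<Rightarrow> real"
  assumes nu: "\<nu> > 0"
    and K: "0 < K" "K < \<nu>\<^sup>2 / 2"
    and gamma: "5/2 < \<gamma>" "\<gamma> < 3"
    and C4: "\<And>m k x. m \<ge> 1 \<Longrightarrow> k < 4 \<Longrightarrow> x \<ge> 0 \<Longrightarrow>
               (Phi m k has_real_derivative Phi m (Suc k) x) (at x within {0..})"
    and C4cont: "\<And>m. m \<ge> 1 \<Longrightarrow> continuous_on {0..} (Phi m 4)"
    and signs: "\<And>m k x. m \<ge> 1 \<Longrightarrow> k \<le> 4 \<Longrightarrow> x \<ge> 0 \<Longrightarrow> (-1) ^ k * Phi m k x \<ge> 0"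
    and strict: "\<And>k s. k \<le> 4 \<Longrightarrow> s > 0 \<Longrightarrow> (-1) ^ k * Phi 1 k s > 0"
    and sum1: "summable (\<lambda>n. let m = Suc n in
                 Phi m 1 (\<nu> * real m - sqrt (2 * K * real m)) * real m)"
    and sum2: "summable (\<lambda>n. let m = Suc n in
                 Phi m 2 (\<nu> * real m - sqrt (2 * K * real m)) * (real m)\<^sup>2)"
    and sum3: "summable (\<lambda>n. let m = Suc n in Phi m 2 (\<nu> * real m) * real m powr \<gamma>)"
    and sum4: "summable (\<lambda>n. let m = Suc n in
                 Phi m 3 (\<nu> * real m - sqrt (2 * K * real m)) * real m powr (3/2))"
  shows "\<forall>W \<in> setC_K K.
     (\<forall>m \<ge> 1. \<forall>\<xi>. 0 \<le> Aavg m W \<xi> \<and> Aavg m W \<xi> < \<nu> * real m) \<and>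
     (\<forall>m \<ge> 1. (\<lambda>\<xi>. deriv (Psi Phi \<nu> m) (Aavg m W \<xi>)) \<in> borel_measurable lborel \<and>
        (\<forall>a b. set_integrable lborel {a..b} (\<lambda>\<xi>. deriv (Psi Phi \<nu> m) (Aavg m W \<xi>)))) \<and>
     (\<forall>m \<ge> 1. L2 (Aavg m (\<lambda>\<xi>. deriv (Psi Phi \<nu> m) (Aavg m W \<xi>)))) \<and>
     (\<exists>G. L2 G \<and>
        (\<lambda>N. LINT x|lborel.
           ((\<Sum>m=1..N. Aavg m (\<lambda>\<xi>. deriv (Psi Phi \<nu> m) (Aavg m W \<xi>)) x) - G x)\<^sup>2)
        \<longlonglongrightarrow> 0)"
proof (intro ballI)
  fix W assume W: "W \<in> setC_K K"
  have K0: "0 \<le> K" using K by simp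
  have ltm: "sqrt (2 * K * real m) < \<nu> * real m" if m: "m \<ge> 1" for m
  proof -
    have m1: "1 \<le> real m" using m by simp
    have "2 * K * real m < \<nu>\<^sup>2 * real m"
      using K m1 by (intro mult_strict_right_mono) auto
    also have "real m \<le> real m * real m" using m1 by (simp add: mult_le_cancel_left1)
    then have "\<nu>\<^sup>2 * real m \<le> \<nu>\<^sup>2 * (real m)\<^sup>2"
      by (intro mult_left_mono) (auto simp: power2_eq_square)
    finally have "2 * K * real m < \<nu>\<^sup>2 * (real m)\<^sup>2" .
    then have "sqrt (2 * K * real m) < sqrt ((\<nu> * real m)\<^sup>2)" by (simp add: power_mult_distrib)
    then show ?thesis using nu by simp
  qed
  show "(\<forall>m \<ge> 1. \<forall>\<xi>. 0 \<le> Aavg m W \<xi> \<and> Aavg m W \<xi> < \<nu> * real m) \<and>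
     (\<forall>m \<ge> 1. (\<lambda>\<xi>. deriv (Psi Phi \<nu> m) (Aavg m W \<xi>)) \<in> borel_measurable lborel \<and>
        (\<forall>a b. set_integrable lborel {a..b} (\<lambda>\<xi>. deriv (Psi Phi \<nu> m) (Aavg m W \<xi>)))) \<and>
     (\<forall>m \<ge> 1. L2 (Aavg m (\<lambda>\<xi>. deriv (Psi Phi \<nu> m) (Aavg m W \<xi>)))) \<and>
     (\<exists>G. L2 G \<and>
        (\<lambda>N. LINT x|lborel.
           ((\<Sum>m=1..N. Aavg m (\<lambda>\<xi>. deriv (Psi Phi \<nu> m) (Aavg m W \<xi>)) x) - G x)\<^sup>2)
        \<longlonglongrightarrow> 0)"
  proof (intro conjI allI impI)
    fix m :: nat assume "m \<ge> 1"
    note P = per_m[of Phi m, OF C4[OF this] signs[OF this] W ltm[OF this] K0]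
    fix \<xi> show "0 \<le> Aavg m W \<xi>" using P(1) by blast
  next
    fix m :: nat and \<xi> assume "m \<ge> 1"
    note P = per_m[of Phi m, OF C4[OF this] signs[OF this] W ltm[OF this] K0]
    show "Aavg m W \<xi> < \<nu> * real m" using P(1) by blast
  next
    fix m :: nat assume "m \<ge> 1"
    note P = per_m[of Phi m, OF C4[OF this] signs[OF this] W ltm[OF this] K0]
    show "(\<lambda>\<xi>. deriv (Psi Phi \<nu> m) (Aavg m W \<xi>)) \<in> borel_measurable lborel" by (rule P(2))
  next
    fix m :: nat and a b :: real assume "m \<ge> 1"
    note P = per_m[of Phi m, OF C4[OF this] signs[OF this] W ltm[OF this] K0]
    show "set_integrable lborel {a..b} (\<lambda>\<xi>. deriv (Psi Phi \<nu> m) (Aavg m W \<xi>))" by (rule P(3))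
  next
    fix m :: nat assume "m \<ge> 1"
    note P = per_m[of Phi m, OF C4[OF this] signs[OF this] W ltm[OF this] K0]
    show "L2 (Aavg m (\<lambda>\<xi>. deriv (Psi Phi \<nu> m) (Aavg m W \<xi>)))" by (rule P(4))
  next
    define f where "f n = Aavg (Suc n) (\<lambda>\<xi>. deriv (Psi Phi \<nu> (Suc n)) (Aavg (Suc n) W \<xi>))" for n
    define a where "a n = Phi (Suc n) 2 (\<nu> * real (Suc n) - sqrt (2 * K * real (Suc n))) * (real (Suc n))\<^sup>2" for n
    have "\<exists>G. L2 G \<and> (\<lambda>N. LINT x|lborel. ((\<Sum>n<N. f n x) - G x)\<^sup>2) \<longlonglongrightarrow> 0"
    proof (rule series_L2[where a=a and B="2*K"])
      fix n
      have s1: "Suc n \<ge> 1" by simp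
      note P = per_m[of Phi "Suc n", OF C4[OF s1] signs[OF s1] W ltm[OF s1] K0]
      show "f n \<in> borel_measurable lborel" using P(4) by (simp add: f_def L2_def)
      show "0 \<le> f n x" for x using P(5) by (simp add: f_def)
      show "(\<integral>\<^sup>+x. ennreal ((f n x)\<^sup>2) \<partial>lborel) \<le> ennreal (2 * K * (a n)\<^sup>2)"
        using P(6) by (simp add: f_def a_def)
      have "0 < \<nu> * real (Suc n) - sqrt (2 * K * real (Suc n))" using ltm[OF s1] by simp
      then show "0 \<le> a n" using signs[OF s1, of 2] by (simp add: a_def)
    next
      have "a = (\<lambda>n. let m = Suc n in
                 Phi m 2 (\<nu> * real m - sqrt (2 * K * real m)) * (real m)\<^sup>2)"
        by (simp add: a_def[abs_def] Let_def)
      then show "summable a" using sum2 by simp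
    next
      show "0 \<le> 2 * K" using K0 by simp
    qed
    then obtain G where G: "L2 G" "(\<lambda>N. LINT x|lborel. ((\<Sum>n<N. f n x) - G x)\<^sup>2) \<longlonglongrightarrow> 0" by blast
    have "(\<Sum>m=1..N. Aavg m (\<lambda>\<xi>. deriv (Psi Phi \<nu> m) (Aavg m W \<xi>)) x) = (\<Sum>n<N. f n x)" for N x
      unfolding f_def by (induct N) auto
    then show "\<exists>G. L2 G \<and>
        (\<lambda>N. LINT x|lborel.
           ((\<Sum>m=1..N. Aavg m (\<lambda>\<xi>. deriv (Psi Phi \<nu> m) (Aavg m W \<xi>)) x) - G x)\<^sup>2)
        \<longlonglongrightarrow> 0" using G by auto
  qed
qed

end
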